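(* Let $\xi=e^{i\pi/5}$, $\tau=\frac{1+\sqrt5}{2}$. For $n\in\mathbb{N}_0$ let $Q_2(n)=\{\sum_{j=0}^9 n_j\xi^j: n_j\in\mathbb{N}_0,\ \sum_j n_j\le n\}$ and $L(n)=Q_2(n)\cap\mathbb{R}$. Then $$L(n)=\{(a+c)+(b-c)\tau \mid a,b,c\in\mathbb{Z},\ |a|+2|b|+2|c|\le n\}.$$
   Context: $L(n)$ is denoted $L_{\alpha_1}(n)$ in the paper. *)

theory Defs
  imports "HOL-Analysis.Analysis"
begin

definition xi :: complex where
  "xi = cis (pi / 5)"

definition tau :: real where
  "tau = (1 + sqrt 5) / 2"

definition Q2 :: "nat \<Rightarrow> complex set" where
  "Q2 n = {(\<Sum>j<10. of_nat (m j) * xi ^ j) | m :: nat \<Rightarrow> nat. (\<Sum>j<10. m j) \<le> n}"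

definition L :: "nat \<Rightarrow> real set" where
  "L n = {x :: real. complex_of_real x \<in> Q2 n}"

end

theory Submission
  imports Defs
begin

lemma tau_sq: "tau^2 = tau + 1"
  unfolding tau_def by (simp add: power2_eq_square field_simps)

lemma cos_pi5: "cos (pi/5) = tau/2"
proof -
  define c where "c = cos (pi/5)"
  have "cos (3*(pi/5)) = 4*c^3 - 3*c" unfolding c_def by (rule cos_treble_cos)
  moreover have "cos (3*(pi/5)) = - cos (2*(pi/5))"
  proof -
    have "cos (3*(pi/5)) = cos (pi - 2*(pi/5))" by (rule arg_cong[of _ _ cos]) simp
    also have "\<dots> = - cos (2*(pi/5))" by (rule cos_pi_minus)
    finally show ?thesis .
  qed
  moreover have "cos (2*(pi/5)) = 2*c^2 - 1" unfolding c_def by (rule cos_double_cos)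
  ultimately have e: "(c+1)*(4*c^2-2*c-1) = 0" by algebra
  have cpos: "c > 0" unfolding c_def using pi_gt_zero by (intro cos_gt_zero_pi) linarith+
  hence "c + 1 \<noteq> 0" by simp
  hence e1: "4*c^2-2*c-1 = 0" using e by simp
  have e2: "(4*c-1)^2 = 5" using e1 by algebra
  have "4*c-1 = sqrt 5 \<or> 4*c-1 = - sqrt 5"
    using e2 by (metis real_sqrt_abs abs_eq_iff')
  moreover have "4*c - 1 \<noteq> - sqrt 5"
  proof
    assume "4*c-1 = - sqrt 5"
    moreover have "sqrt 5 \<ge> 1" by simp
    ultimately show False using cpos by linarith
  qed
  ultimately have "4*c-1 = sqrt 5" by blast
  thus ?thesis unfolding c_def tau_def by simp
qed

lemma sum10: fixes f :: "nat \<Rightarrow> 'a::comm_monoid_add"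
  shows "(\<Sum>j<10. f j) = f 0 + f 1 + f 2 + f 3 + f 4 + f 5 + f 6 + f 7 + f 8 + f 9"
  by (simp add: eval_nat_numeral add.assoc)

lemma five_dvd: "(5::int) dvd x^2 \<Longrightarrow> 5 dvd x"
proof -
  assume "5 dvd x^2"
  have "x mod 5 \<in> {0,1,2,3,4}" by auto
  moreover have "x^2 mod 5 = (x mod 5)^2 mod 5" by (simp add: power_mod)
  ultimately show ?thesis using \<open>5 dvd x^2\<close> by auto
qed

lemma sq5_aux: "\<forall>x y::int. nat \<bar>y\<bar> = k \<longrightarrow> x^2 = 5*y^2 \<longrightarrow> y = 0"
proof (induction k rule: less_induct)
  case (less k)
  show ?case
  proof (intro allI impI)
    fix x y :: int
    assume k: "nat \<bar>y\<bar> = k" and e: "x^2 = 5*y^2"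
    have "5 dvd x^2" using e by simp
    then obtain x' where x': "x = 5*x'" using five_dvd by blast
    have e2: "y^2 = 5*x'^2" using e x' by (simp add: power_mult_distrib)
    hence "5 dvd y^2" by simp
    then obtain y' where y': "y = 5*y'" using five_dvd by blast
    have e3: "x'^2 = 5*y'^2" using e2 y' by (simp add: power_mult_distrib)
    show "y = 0"
    proof (rule ccontr)
      assume "y \<noteq> 0"
      hence "nat \<bar>y'\<bar> < k" using k y' by auto
      hence "y' = 0" using less e3 by blast
      thus False using y' \<open>y \<noteq> 0\<close> by simp
    qed
  qed
qed

lemma sq5: "(x::int)^2 = 5*y^2 \<Longrightarrow> y = 0"
  using sq5_aux by blast

lemma tau_irr:
  fixes p q :: int
  assumes "real_of_int p + real_of_int q * tau = 0"
  shows "p = 0 \<and> q = 0"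
proof -
  have "real_of_int q * tau = - real_of_int p" using assms by linarith
  hence "(real_of_int q * tau)^2 = (real_of_int p)^2" by simp
  hence "(real_of_int q)^2 * (tau + 1) = (real_of_int p)^2"
    by (simp add: power_mult_distrib tau_sq)
  hence "real_of_int ((2*p+q)^2) = real_of_int (5*q^2)"
    using \<open>real_of_int q * tau = - real_of_int p\<close> by simp algebra
  hence "(2*p+q)^2 = 5*q^2" by (simp only: of_int_eq_iff)
  hence "q = 0" by (rule sq5)
  thus ?thesis using assms by simp
qed

definition ssn :: real where "ssn = sin (pi/5)"

lemma ssn_pos: "ssn > 0"
  unfolding ssn_def using pi_gt_zero by (intro sin_gt_zero) linarith+

lemma ssn_sq: "ssn^2 = 1 - tau^2/4"
proof -
  have "ssn^2 + (cos (pi/5))^2 = 1" unfolding ssn_def by (rule sin_cos_squared_add)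
  thus ?thesis using cos_pi5 by (simp add: power_divide)
qed

lemma xi1: "xi = Complex (tau/2) ssn"
  unfolding xi_def ssn_def by (simp add: complex_eq_iff cos_pi5)

lemma cmul: "Complex a b * Complex c d = Complex (a*c - b*d) (a*d + b*c)"
  by (simp add: complex_eq_iff)

lemma ssn_sq4: "4 * ssn^2 = 3 - tau"
  using ssn_sq tau_sq by (simp add: field_simps)

lemma xi_step:
  assumes "xi^k = Complex (a/2) b" "a * tau - 4 * b * ssn = 2 * a'" "a * ssn + b * tau = 2 * b'"
  shows "xi^(Suc k) = Complex (a'/2) b'"
proof -
  have "xi^(Suc k) = xi^k * xi" by (rule power_Suc2)
  also have "\<dots> = Complex (a'/2) b'" using assms by (simp add: xi1 cmul field_simps)
  finally show ?thesis .
qed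

lemma xi0: "xi^0 = Complex (2/2) 0" by (simp add: complex_eq_iff)
lemma xi1': "xi^1 = Complex (tau/2) ssn" by (simp add: xi1)

lemma xi2: "xi^2 = Complex ((tau - 1)/2) (tau * ssn)"
proof -
  have "xi^(Suc 1) = Complex ((tau - 1)/2) (tau * ssn)"
    by (rule xi_step[OF xi1']) (use tau_sq ssn_sq4 in \<open>(simp add: algebra_simps; fail) | algebra\<close>)+
  thus ?thesis by (simp add: eval_nat_numeral)
qed

lemma xi3: "xi^3 = Complex ((1 - tau)/2) (tau * ssn)"
proof -
  have "xi^(Suc 2) = Complex ((1 - tau)/2) (tau * ssn)"
    by (rule xi_step[OF xi2]) (use tau_sq ssn_sq4 in \<open>(simp add: algebra_simps; fail) | algebra\<close>)+
  thus ?thesis by (simp add: eval_nat_numeral)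
qed

lemma xi4: "xi^4 = Complex ((- tau)/2) (ssn)"
proof -
  have "xi^(Suc 3) = Complex ((- tau)/2) (ssn)"
    by (rule xi_step[OF xi3]) (use tau_sq ssn_sq4 in \<open>(simp add: algebra_simps; fail) | algebra\<close>)+
  thus ?thesis by (simp add: eval_nat_numeral)
qed

lemma xi5: "xi^5 = Complex ((-2)/2) (0)"
proof -
  have "xi^(Suc 4) = Complex ((-2)/2) (0)"
    by (rule xi_step[OF xi4]) (use tau_sq ssn_sq4 in \<open>(simp add: algebra_simps; fail) | algebra\<close>)+
  thus ?thesis by (simp add: eval_nat_numeral)
qed

lemma xi6: "xi^6 = Complex ((- tau)/2) (- ssn)"
proof -
  have "xi^(Suc 5) = Complex ((- tau)/2) (- ssn)"
    by (rule xi_step[OF xi5]) (use tau_sq ssn_sq4 in \<open>(simp add: algebra_simps; fail) | algebra\<close>)+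
  thus ?thesis by (simp add: eval_nat_numeral)
qed

lemma xi7: "xi^7 = Complex ((1 - tau)/2) (- (tau * ssn))"
proof -
  have "xi^(Suc 6) = Complex ((1 - tau)/2) (- (tau * ssn))"
    by (rule xi_step[OF xi6]) (use tau_sq ssn_sq4 in \<open>(simp add: algebra_simps; fail) | algebra\<close>)+
  thus ?thesis by (simp add: eval_nat_numeral)
qed

lemma xi8: "xi^8 = Complex ((tau - 1)/2) (- (tau * ssn))"
proof -
  have "xi^(Suc 7) = Complex ((tau - 1)/2) (- (tau * ssn))"
    by (rule xi_step[OF xi7]) (use tau_sq ssn_sq4 in \<open>(simp add: algebra_simps; fail) | algebra\<close>)+
  thus ?thesis by (simp add: eval_nat_numeral)
qed

lemma xi9: "xi^9 = Complex ((tau)/2) (- ssn)"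
proof -
  have "xi^(Suc 8) = Complex ((tau)/2) (- ssn)"
    by (rule xi_step[OF xi8]) (use tau_sq ssn_sq4 in \<open>(simp add: algebra_simps; fail) | algebra\<close>)+
  thus ?thesis by (simp add: eval_nat_numeral)
qed

lemma sumf:
  fixes m :: "nat \<Rightarrow> nat"
  defines "r \<equiv> \<lambda>j. real (m j)"
  shows "(\<Sum>j<10. of_nat (m j) * xi^j) =
    Complex ((r 0 - r 5) + tau/2 * (r 1 + r 9 - r 4 - r 6) + (tau-1)/2 * (r 2 + r 8 - r 3 - r 7))
            (ssn * ((r 1 - r 9 + r 4 - r 6) + tau * (r 2 - r 8 + r 3 - r 7)))"
  unfolding sum10 r_def xi0 xi1' xi2 xi3 xi4 xi5 xi6 xi7 xi8 xi9
  by (simp add: complex_eq_iff field_simps)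

lemma natdiff: "real (nat z) - real (nat (- z)) = real_of_int z"
  by (cases "z \<ge> 0") auto

lemma absl: "(p::int) \<ge> 0 \<Longrightarrow> q \<ge> 0 \<Longrightarrow> r \<ge> 0 \<Longrightarrow> t \<ge> 0 \<Longrightarrow> p - q + r - t = 0
   \<Longrightarrow> 2 * \<bar>p - t\<bar> \<le> p + q + r + t"
  by (cases "p \<ge> t") (simp_all add: abs_if)

theorem corollary6p7:
  fixes n :: nat
  shows "L n = {real_of_int (a + c) + real_of_int (b - c) * tau | a b c :: int.
                 \<bar>a\<bar> + 2 * \<bar>b\<bar> + 2 * \<bar>c\<bar> \<le> int n}"
proof (rule set_eqI, rule iffI)
  fix x assume "x \<in> L n"
  then obtain m :: "nat \<Rightarrow> nat" where sm: "(\<Sum>j<10. m j) \<le> n"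
    and xe: "complex_of_real x = (\<Sum>j<10. of_nat (m j) * xi^j)"
    unfolding L_def Q2_def by auto
  define r where "r = (\<lambda>j. real (m j))"
  define A where "A = int (m 1) - int (m 9) + int (m 4) - int (m 6)"
  define B where "B = int (m 2) - int (m 8) + int (m 3) - int (m 7)"
  have ximx: "Im (complex_of_real x) = ssn * ((r 1 - r 9 + r 4 - r 6) + tau * (r 2 - r 8 + r 3 - r 7))"
    and rex: "x = (r 0 - r 5) + tau/2 * (r 1 + r 9 - r 4 - r 6) + (tau-1)/2 * (r 2 + r 8 - r 3 - r 7)"
    using arg_cong[OF xe, of Im] arg_cong[OF xe, of Re] unfolding sumf r_def by simp_all
  have "ssn * (real_of_int A + real_of_int B * tau) = 0"
    using ximx unfolding A_def B_def r_def by (simp add: algebra_simps)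
  hence "real_of_int A + real_of_int B * tau = 0" using ssn_pos by simp
  hence AB: "A = 0" "B = 0" using tau_irr by blast+
  have rA0: "r 1 - r 9 + r 4 - r 6 = 0"
  proof -
    have "real_of_int A = 0" using AB by simp
    thus ?thesis unfolding A_def r_def by simp
  qed
  have rB0: "r 2 - r 8 + r 3 - r 7 = 0"
  proof -
    have "real_of_int B = 0" using AB by simp
    thus ?thesis unfolding B_def r_def by simp
  qed
  have rA: "r 1 + r 9 - r 4 - r 6 = 2 * (r 1 - r 6)" using rA0 by (smt (verit))
  have rB: "r 2 + r 8 - r 3 - r 7 = 2 * (r 2 - r 7)" using rB0 by (smt (verit))
  define a where "a = int (m 0) - int (m 5)"
  define b where "b = int (m 1) - int (m 6)"
  define c where "c = int (m 7) - int (m 2)"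
  have "x = real_of_int (a + c) + real_of_int (b - c) * tau"
  proof -
    have "x = (r 0 - r 5) + tau/2 * (2 * (r 1 - r 6)) + (tau-1)/2 * (2 * (r 2 - r 7))"
      using rex unfolding rA rB .
    thus ?thesis unfolding a_def b_def c_def r_def by (simp add: field_simps)
  qed
  moreover have "\<bar>a\<bar> + 2 * \<bar>b\<bar> + 2 * \<bar>c\<bar> \<le> int n"
  proof -
    have "m 0 + m 1 + m 2 + m 3 + m 4 + m 5 + m 6 + m 7 + m 8 + m 9 \<le> n" using sm unfolding sum10 .
    hence "int (m 0) + int (m 1) + int (m 2) + int (m 3) + int (m 4) + int (m 5) + int (m 6)
       + int (m 7) + int (m 8) + int (m 9) \<le> int n" by (simp only: of_nat_add[symmetric] of_nat_le_iff)
    moreover have "\<bar>a\<bar> \<le> int (m 0) + int (m 5)" unfolding a_def by linarith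
    moreover have "2 * \<bar>b\<bar> \<le> int (m 1) + int (m 9) + int (m 4) + int (m 6)"
      using AB(1) absl[of "int (m 1)" "int (m 9)" "int (m 4)" "int (m 6)"] unfolding b_def A_def by linarith
    moreover have "2 * \<bar>c\<bar> \<le> int (m 2) + int (m 8) + int (m 3) + int (m 7)"
      using AB(2) absl[of "int (m 7)" "int (m 3)" "int (m 8)" "int (m 2)"] unfolding c_def B_def by linarith
    ultimately show ?thesis by linarith
  qed
  ultimately show "x \<in> {real_of_int (a + c) + real_of_int (b - c) * tau | a b c :: int.
                 \<bar>a\<bar> + 2 * \<bar>b\<bar> + 2 * \<bar>c\<bar> \<le> int n}" by blast
next
  fix x assume "x \<in> {real_of_int (a + c) + real_of_int (b - c) * tau | a b c :: int.
                 \<bar>a\<bar> + 2 * \<bar>b\<bar> + 2 * \<bar>c\<bar> \<le> int n}"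
  then obtain a b c :: int where xe: "x = real_of_int (a + c) + real_of_int (b - c) * tau"
    and bd: "\<bar>a\<bar> + 2 * \<bar>b\<bar> + 2 * \<bar>c\<bar> \<le> int n" by blast
  define m where "m = (\<lambda>j::nat. [nat a, nat b, nat (-c), nat c, nat (-b), nat (-a), nat (-b), nat c, nat (-c), nat b] ! j)"
  have m: "m 0 = nat a" "m 1 = nat b" "m 2 = nat (-c)" "m 3 = nat c" "m 4 = nat (-b)"
    "m 5 = nat (-a)" "m 6 = nat (-b)" "m 7 = nat c" "m 8 = nat (-c)" "m 9 = nat b"
    unfolding m_def by simp_all
  have "(\<Sum>j<10. m j) \<le> n"
  proof -
    have "int (\<Sum>j<10. m j) = int (nat a) + int (nat b) + int (nat (-c)) + int (nat c) + int (nat (-b))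
       + int (nat (-a)) + int (nat (-b)) + int (nat c) + int (nat (-c)) + int (nat b)"
      unfolding sum10 m by simp
    also have "\<dots> \<le> int n"
    proof -
      have "int (nat z) + int (nat (-z)) = \<bar>z\<bar>" for z :: int by (cases "z \<ge> 0") auto
      from this[of a] this[of b] this[of c] show ?thesis using bd by linarith
    qed
    finally show ?thesis by (simp only: of_nat_le_iff)
  qed
  moreover have "complex_of_real x = (\<Sum>j<10. of_nat (m j) * xi^j)"
  proof -
    have e1: "real (m 0) - real (m 5) = of_int a" using natdiff[of a] m by simp
    have e2: "real (m 1) + real (m 9) - real (m 4) - real (m 6) = 2 * of_int b" using natdiff[of b] m by simp
    have e3: "real (m 2) + real (m 8) - real (m 3) - real (m 7) = - 2 * of_int c" using natdiff[of c] m by simp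
    have e4: "real (m 1) - real (m 9) + real (m 4) - real (m 6) = 0" using m by simp
    have e5: "real (m 2) - real (m 8) + real (m 3) - real (m 7) = 0" using m by simp
    show ?thesis unfolding sumf e1 e2 e3 e4 e5 xe by (simp add: complex_eq_iff field_simps)
  qed
  ultimately show "x \<in> L n" unfolding L_def Q2_def by blast
qed

end
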